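(* Let $m\in\mathbb{N}$ and let $L,M,N$ be nonempty subsets of $[m]$. Let $D=(1+u^2)D_1+u^2\big(D_2+(u+u^2)D_3\big)\subseteq\mathcal{R}^m$ where $D_1\in\{\Delta_L,\Delta_L^c\}$, $D_2\in\{\Delta_M,\Delta_M^c\}$, $D_3\in\{\Delta_N,\Delta_N^c\}$. Then the binary linear code $\Phi(C_D)$ is self-orthogonal (with respect to the Euclidean inner product on $\mathbb{Z}_2^{3|D|}$).
   Context: $\mathcal{R}=\mathbb{Z}_2[u]/\langle u^3-u\rangle$; every $x\in\mathcal{R}^n$ is uniquely $x=r+us+u^2t$ with $r,s,t\in\mathbb{Z}_2^n$, and $\mathbb{Z}_2^n\subseteq\mathcal{R}^n$. The Gray map $\Phi:\mathcal{R}^n\to\mathbb{Z}_2^{3n}$ is $\Phi(r+us+u^2t)=(r+s,\,s+t,\,t)$. $[m]=\{1,\dots,m\}$; for $X\subseteq[m]$, $\Delta_X=\{v\in\mathbb{Z}_2^m:\mathrm{Supp}(v)\subseteq X\}$ and $\Delta_X^c=\mathbb{Z}_2^m\setminus\Delta_X$. For $D_1,D_2,D_3\subseteq\mathbb{Z}_2^m$, $(1+u^2)D_1+u^2(D_2+(u+u^2)D_3)=\{(1+u^2)t_1+u^2t_2+u^2(u+u^2)t_3:t_i\in D_i\}\subseteq\mathcal{R}^m$. Given $D=\{d_1,\dots,d_n\}\subseteq\mathcal{R}^m$ (in a fixed order), $C_D=\{(v\cdot d_1,\dots,v\cdot d_n):v\in\mathcal{R}^m\}$ with $v\cdot d=\sum_i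 v_id_i$, and $\Phi(C_D)=\{\Phi(c):c\in C_D\}\subseteq\mathbb{Z}_2^{3n}$. A binary code $C$ is self-orthogonal if $C\subseteq C^\perp$. *)

theory Defs
  imports Main "HOL-Library.Z2"
begin

text \<open>The ring R = Z_2[u]/(u^3 - u). An element r + u s + u^2 t is represented
  by the triple (r, s, t) of elements of Z_2 (type bit).\<close>

type_synonym rr = "bit \<times> bit \<times> bit"

definition r_of :: "rr \<Rightarrow> bit" where "r_of x = fst x"
definition s_of :: "rr \<Rightarrow> bit" where "s_of x = fst (snd x)"
definition t_of :: "rr \<Rightarrow> bit" where "t_of x = snd (snd x)"

definition radd :: "rr \<Rightarrow> rr \<Rightarrow> rr" where
  "radd x y = (r_of x + r_of y, s_of x + s_of y, t_of x + t_of y)"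

text \<open>Multiplication using u^3 = u (hence u^4 = u^2).\<close>
definition rmul :: "rr \<Rightarrow> rr \<Rightarrow> rr" where
  "rmul x y =
    (r_of x * r_of y,
     r_of x * s_of y + s_of x * r_of y + s_of x * t_of y + t_of x * s_of y,
     r_of x * t_of y + t_of x * r_of y + s_of x * s_of y + t_of x * t_of y)"

definition r_one :: rr where "r_one = (1, 0, 0)"
definition r_u :: rr where "r_u = (0, 1, 0)"
definition r_u2 :: rr where "r_u2 = (0, 0, 1)"

text \<open>Vectors of length m are functions on nat, indexed by [m] = {1..m}, vanishing
  outside [m].\<close>

definition bvecs :: "nat \<Rightarrow> (nat \<Rightarrow> bit) set" where
  "bvecs m = {v. \<forall>i. i \<notin> {1..m} \<longrightarrow> v i = 0}"

definition rvecs :: "nat \<Rightarrow> (nat \<Rightarrow> rr) set" where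
  "rvecs m = {v. \<forall>i. i \<notin> {1..m} \<longrightarrow> v i = (0, 0, 0)}"

definition embed :: "(nat \<Rightarrow> bit) \<Rightarrow> (nat \<Rightarrow> rr)" where
  "embed v = (\<lambda>i. (v i, 0, 0))"

definition rvadd :: "(nat \<Rightarrow> rr) \<Rightarrow> (nat \<Rightarrow> rr) \<Rightarrow> (nat \<Rightarrow> rr)" where
  "rvadd v w = (\<lambda>i. radd (v i) (w i))"

definition rsmul :: "rr \<Rightarrow> (nat \<Rightarrow> rr) \<Rightarrow> (nat \<Rightarrow> rr)" where
  "rsmul a v = (\<lambda>i. rmul a (v i))"

definition supp :: "(nat \<Rightarrow> bit) \<Rightarrow> nat set" where
  "supp v = {i. v i \<noteq> 0}"

definition Delta :: "nat \<Rightarrow> nat set \<Rightarrow> (nat \<Rightarrow> bit) set" where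
  "Delta m X = {v \<in> bvecs m. supp v \<subseteq> X}"

definition Delta_c :: "nat \<Rightarrow> nat set \<Rightarrow> (nat \<Rightarrow> bit) set" where
  "Delta_c m X = bvecs m - Delta m X"

definition defset ::
  "(nat \<Rightarrow> bit) set \<Rightarrow> (nat \<Rightarrow> bit) set \<Rightarrow> (nat \<Rightarrow> bit) set \<Rightarrow> (nat \<Rightarrow> rr) set" where
  "defset D1 D2 D3 =
    {rvadd (rvadd (rsmul (radd r_one r_u2) (embed t1)) (rsmul r_u2 (embed t2)))
           (rsmul (rmul r_u2 (radd r_u r_u2)) (embed t3))
     | t1 t2 t3. t1 \<in> D1 \<and> t2 \<in> D2 \<and> t3 \<in> D3}"

definition rdot :: "nat \<Rightarrow> (nat \<Rightarrow> rr) \<Rightarrow> (nat \<Rightarrow> rr) \<Rightarrow> rr" where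
  "rdot m v d = foldr (\<lambda>i acc. radd (rmul (v i) (d i)) acc) [1..<Suc m] (0, 0, 0)"

text \<open>The code C_D for D listed in a fixed order ds = [d_1, ..., d_n].\<close>
definition code_D :: "nat \<Rightarrow> (nat \<Rightarrow> rr) list \<Rightarrow> rr list set" where
  "code_D m ds = {map (\<lambda>d. rdot m v d) ds | v. v \<in> rvecs m}"

definition gray :: "rr list \<Rightarrow> bit list" where
  "gray c = map (\<lambda>x. r_of x + s_of x) c @ map (\<lambda>x. s_of x + t_of x) c @ map t_of c"

definition gray_code :: "rr list set \<Rightarrow> bit list set" where
  "gray_code C = gray ` C"

definition binner :: "bit list \<Rightarrow> bit list \<Rightarrow> bit" where
  "binner x y = sum_list (map2 (*) x y)"

definition dual_code :: "nat \<Rightarrow> bit list set \<Rightarrow> bit list set" where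
  "dual_code N C = {y. length y = N \<and> (\<forall>x\<in>C. binner x y = 0)}"

definition self_orthogonal :: "nat \<Rightarrow> bit list set \<Rightarrow> bool" where
  "self_orthogonal N C \<longleftrightarrow> C \<subseteq> dual_code N C"

end

theory Submission
  imports Defs
begin


lemma comp1: "r_of (rmul p (x1, x3, x1+x2+x3)) + s_of (rmul p (x1, x3, x1+x2+x3)) =
   r_of p * x1 + s_of p * x2 + (r_of p + s_of p + t_of p) * x3"
proof -
  obtain a b c where p: "p = (a,b,c)" by (cases p) auto
  show ?thesis unfolding p
    by (cases a; cases b; cases c; cases x1; cases x2; cases x3) (simp_all add: rmul_def r_of_def s_of_def t_of_def)
qed

lemma comp2: "s_of (rmul p (x1, x3, x1+x2+x3)) + t_of (rmul p (x1, x3, x1+x2+x3)) =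
   r_of p * x1 + (r_of p + s_of p + t_of p) * x2 + 0 * x3"
proof -
  obtain a b c where p: "p = (a,b,c)" by (cases p) auto
  show ?thesis unfolding p
    by (cases a; cases b; cases c; cases x1; cases x2; cases x3) (simp_all add: rmul_def r_of_def s_of_def t_of_def)
qed

lemma comp3: "t_of (rmul p (x1, x3, x1+x2+x3)) =
   r_of p * x1 + (r_of p + t_of p) * x2 + (r_of p + s_of p + t_of p) * x3"
proof -
  obtain a b c where p: "p = (a,b,c)" by (cases p) auto
  show ?thesis unfolding p
    by (cases a; cases b; cases c; cases x1; cases x2; cases x3) (simp_all add: rmul_def r_of_def s_of_def t_of_def)
qed

definition dvec :: "(nat \<Rightarrow> bit) \<Rightarrow> (nat \<Rightarrow> bit) \<Rightarrow> (nat \<Rightarrow> bit) \<Rightarrow> (nat \<Rightarrow> rr)" where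
  "dvec t1 t2 t3 = rvadd (rvadd (rsmul (radd r_one r_u2) (embed t1)) (rsmul r_u2 (embed t2)))
           (rsmul (rmul r_u2 (radd r_u r_u2)) (embed t3))"

lemma dvec_eq: "dvec t1 t2 t3 i = (t1 i, t3 i, t1 i + t2 i + t3 i)"
  unfolding dvec_def rvadd_def rsmul_def embed_def
  by (cases "t1 i"; cases "t2 i"; cases "t3 i")
     (simp_all add: rmul_def radd_def r_of_def s_of_def t_of_def r_one_def r_u_def r_u2_def)

lemma foldr_comp: "foldr (\<lambda>i acc. radd (g i) acc) xs (0, 0, 0) =
  (sum_list (map (\<lambda>i. r_of (g i)) xs), sum_list (map (\<lambda>i. s_of (g i)) xs), sum_list (map (\<lambda>i. t_of (g i)) xs))"
  by (induction xs) (simp_all add: radd_def r_of_def s_of_def t_of_def del: add_bit_eq_xor)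

lemma rdot_eq: "rdot m v d = ((\<Sum>i\<in>{1..m}. r_of (rmul (v i) (d i))),
   (\<Sum>i\<in>{1..m}. s_of (rmul (v i) (d i))), (\<Sum>i\<in>{1..m}. t_of (rmul (v i) (d i))))"
  unfolding rdot_def foldr_comp
  by (simp only: sum_list_distinct_conv_sum_set[OF distinct_upt] set_upt atLeastLessThanSuc_atLeastAtMost)

definition Lin :: "nat \<Rightarrow> (nat \<Rightarrow> bit) \<Rightarrow> (nat \<Rightarrow> bit) \<Rightarrow> bit" where
  "Lin m a t = (\<Sum>i\<in>{1..m}. a i * t i)"

lemma sum3_split: "(\<Sum>i\<in>A. (a i * x i + b i * y i + c i * z i :: bit)) =
   (\<Sum>i\<in>A. a i * x i) + (\<Sum>i\<in>A. b i * y i) + (\<Sum>i\<in>A. c i * z i)"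
  by (simp only: sum.distrib)

lemma G1: "r_of (rdot m v (dvec t1 t2 t3)) + s_of (rdot m v (dvec t1 t2 t3)) =
  Lin m (\<lambda>i. r_of (v i)) t1 + Lin m (\<lambda>i. s_of (v i)) t2 + Lin m (\<lambda>i. r_of (v i) + s_of (v i) + t_of (v i)) t3"
proof -
  have "r_of (rdot m v (dvec t1 t2 t3)) + s_of (rdot m v (dvec t1 t2 t3)) =
     (\<Sum>i\<in>{1..m}. r_of (rmul (v i) (dvec t1 t2 t3 i)) + s_of (rmul (v i) (dvec t1 t2 t3 i)))"
    unfolding rdot_eq sum.distrib by (simp only: r_of_def s_of_def fst_conv snd_conv)
  also have "\<dots> = (\<Sum>i\<in>{1..m}. r_of (v i) * t1 i + s_of (v i) * t2 i + (r_of (v i) + s_of (v i) + t_of (v i)) * t3 i)"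
    by (rule sum.cong[OF refl]) (simp only: dvec_eq comp1)
  finally show ?thesis unfolding Lin_def sum3_split .
qed

lemma G2: "s_of (rdot m v (dvec t1 t2 t3)) + t_of (rdot m v (dvec t1 t2 t3)) =
  Lin m (\<lambda>i. r_of (v i)) t1 + Lin m (\<lambda>i. r_of (v i) + s_of (v i) + t_of (v i)) t2 + Lin m (\<lambda>i. 0) t3"
proof -
  have "s_of (rdot m v (dvec t1 t2 t3)) + t_of (rdot m v (dvec t1 t2 t3)) =
     (\<Sum>i\<in>{1..m}. s_of (rmul (v i) (dvec t1 t2 t3 i)) + t_of (rmul (v i) (dvec t1 t2 t3 i)))"
    unfolding rdot_eq sum.distrib by (simp only: t_of_def s_of_def fst_conv snd_conv)
  also have "\<dots> = (\<Sum>i\<in>{1..m}. r_of (v i) * t1 i + (r_of (v i) + s_of (v i) + t_of (v i)) * t2 i + 0 * t3 i)"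
    by (rule sum.cong[OF refl]) (simp only: dvec_eq comp2)
  finally show ?thesis unfolding Lin_def sum3_split .
qed

lemma G3: "t_of (rdot m v (dvec t1 t2 t3)) =
  Lin m (\<lambda>i. r_of (v i)) t1 + Lin m (\<lambda>i. r_of (v i) + t_of (v i)) t2 + Lin m (\<lambda>i. r_of (v i) + s_of (v i) + t_of (v i)) t3"
proof -
  have "t_of (rdot m v (dvec t1 t2 t3)) =
     (\<Sum>i\<in>{1..m}. t_of (rmul (v i) (dvec t1 t2 t3 i)))"
    unfolding rdot_eq by (simp only: t_of_def fst_conv snd_conv)
  also have "\<dots> = (\<Sum>i\<in>{1..m}. r_of (v i) * t1 i + (r_of (v i) + t_of (v i)) * t2 i + (r_of (v i) + s_of (v i) + t_of (v i)) * t3 i)"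
    by (rule sum.cong[OF refl]) (simp only: dvec_eq comp3)
  finally show ?thesis unfolding Lin_def sum3_split .
qed

lemma of_nat_even_bit: "even n \<Longrightarrow> (of_nat n :: bit) = 0"
  by (elim evenE) simp

lemma sum3: "(\<Sum>a\<in>A. \<Sum>b\<in>B. \<Sum>c\<in>C. F a b c) = (\<Sum>(a,b,c)\<in>A\<times>B\<times>C. F a b c)"
  by (simp add: sum.cartesian_product del: add_bit_eq_xor mult_bit_eq_and)

lemma key:
  fixes f1 f2 f3 g1 g2 g3 :: "(nat \<Rightarrow> bit) \<Rightarrow> bit"
  assumes "finite A" "finite B" "finite C" "even (card A)" "even (card B)" "even (card C)"
  shows "(\<Sum>(a,b,c)\<in>A\<times>B\<times>C. (f1 a + f2 b + f3 c) * (g1 a + g2 b + g3 c)) = 0"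
proof -
  define P where "P a b = f1 a * g1 a + f1 a * g2 b + f2 b * g1 a + f2 b * g2 b" for a b
  define Q where "Q a c = f1 a * g3 c + f3 c * g1 a + f3 c * g3 c" for a c
  define R where "R b c = f2 b * g3 c + f3 c * g2 b" for b c
  have pt: "(f1 a + f2 b + f3 c) * (g1 a + g2 b + g3 c) = P a b + Q a c + R b c" for a b c
    unfolding P_def Q_def R_def by (simp only: algebra_simps)
  have "(\<Sum>(a,b,c)\<in>A\<times>B\<times>C. (f1 a + f2 b + f3 c) * (g1 a + g2 b + g3 c))
      = (\<Sum>a\<in>A. \<Sum>b\<in>B. \<Sum>c\<in>C. P a b + Q a c + R b c)"
    unfolding sum3 pt ..
  also have "\<dots> = (\<Sum>a\<in>A. \<Sum>b\<in>B. \<Sum>c\<in>C. P a b) + (\<Sum>a\<in>A. \<Sum>b\<in>B. \<Sum>c\<in>C. Q a c)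
      + (\<Sum>a\<in>A. \<Sum>b\<in>B. \<Sum>c\<in>C. R b c)"
    by (simp only: sum.distrib)
  also have "(\<Sum>a\<in>A. \<Sum>b\<in>B. \<Sum>c\<in>C. P a b) = 0"
    using of_nat_even_bit[OF assms(6)] by (simp del: add_bit_eq_xor mult_bit_eq_and)
  also have "(\<Sum>a\<in>A. \<Sum>b\<in>B. \<Sum>c\<in>C. Q a c) = 0"
  proof -
    have "(\<Sum>b\<in>B. \<Sum>c\<in>C. Q a c) = of_nat (card B) * (\<Sum>c\<in>C. Q a c)" for a
      by simp
    then show ?thesis using of_nat_even_bit[OF assms(5)] by (simp del: add_bit_eq_xor mult_bit_eq_and)
  qed
  also have "(\<Sum>a\<in>A. \<Sum>b\<in>B. \<Sum>c\<in>C. R b c) = 0"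
    using of_nat_even_bit[OF assms(4)] by (simp del: add_bit_eq_xor mult_bit_eq_and)
  finally show ?thesis by simp
qed

definition tog :: "nat \<Rightarrow> (nat \<Rightarrow> bit) \<Rightarrow> (nat \<Rightarrow> bit)" where
  "tog i v = v(i := v i + 1)"

lemma tog_tog: "tog i (tog i v) = v"
  unfolding tog_def by (cases "v i") auto

lemma even_card_tog:
  assumes "finite A" "\<And>v. v \<in> A \<Longrightarrow> tog i v \<in> A"
  shows "even (card A)"
proof -
  define A0 where "A0 = {v\<in>A. v i = 0}"
  define A1 where "A1 = {v\<in>A. v i = 1}"
  have U: "A = A0 \<union> A1" "A0 \<inter> A1 = {}" unfolding A0_def A1_def by auto
  have "bij_betw (tog i) A0 A1"
  proof (rule bij_betw_byWitness[where f'="tog i"])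
    have ti: "tog i v i = v i + 1" for v unfolding tog_def by simp
    show "tog i ` A0 \<subseteq> A1" using assms(2) ti unfolding A0_def A1_def by fastforce
    show "tog i ` A1 \<subseteq> A0" using assms(2) ti unfolding A0_def A1_def by fastforce
  qed (simp_all add: tog_tog)
  then have "card A0 = card A1" by (rule bij_betw_same_card)
  moreover have "card A = card A0 + card A1"
    using U assms(1) by (metis card_Un_disjoint finite_Un)
  ultimately show ?thesis by simp
qed

lemma finite_bvecs: "finite (bvecs m)"
proof -
  have "bvecs m \<subseteq> (\<lambda>S j. if j \<in> S then 1 else 0) ` Pow {1..m}"
  proof
    fix v assume v: "v \<in> bvecs m"
    have "v = (\<lambda>j. if j \<in> supp v then 1 else 0)"
      by (rule ext) (auto simp: supp_def)
    moreover have "supp v \<in> Pow {1..m}" using v by (auto simp: supp_def bvecs_def)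
    ultimately show "v \<in> (\<lambda>S j. if j \<in> S then 1 else 0) ` Pow {1..m}" by blast
  qed
  then show ?thesis by (rule finite_subset) simp
qed

lemma tog_bvecs: "i \<in> {1..m} \<Longrightarrow> v \<in> bvecs m \<Longrightarrow> tog i v \<in> bvecs m"
  unfolding bvecs_def tog_def by auto

lemma tog_supp: "i \<in> X \<Longrightarrow> supp (tog i v) \<subseteq> X \<longleftrightarrow> supp v \<subseteq> X"
  unfolding supp_def tog_def by auto

lemma Dsets_ok:
  assumes "X \<subseteq> {1..m}" "X \<noteq> {}" "D \<in> {Delta m X, Delta_c m X}"
  shows "finite D \<and> even (card D) \<and> D \<subseteq> bvecs m"
proof -
  obtain i where i: "i \<in> X" using assms(2) by blast
  have im: "i \<in> {1..m}" using i assms(1) by blast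
  have sub: "D \<subseteq> bvecs m" using assms(3) by (auto simp: Delta_def Delta_c_def)
  have fin: "finite D" using finite_subset[OF sub finite_bvecs] .
  have "\<And>v. v \<in> D \<Longrightarrow> tog i v \<in> D"
    using assms(3) tog_bvecs[OF im] tog_supp[OF i]
    by (auto simp: Delta_def Delta_c_def)
  then show ?thesis using fin sub even_card_tog by blast
qed

definition Hf :: "rr \<Rightarrow> rr \<Rightarrow> bit" where
  "Hf x y = (r_of x + s_of x) * (r_of y + s_of y) + (s_of x + t_of x) * (s_of y + t_of y) + t_of x * t_of y"

lemma sum_list_add3: "sum_list (map f xs) + sum_list (map g xs) + sum_list (map h xs) =
   sum_list (map (\<lambda>x. f x + g x + h x) xs)" for f g h :: "'a \<Rightarrow> bit"
  by (induction xs) (simp_all only: list.map sum_list.Nil sum_list.Cons algebra_simps add_0_left)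

lemma binner_gray: "length c = length c' \<Longrightarrow> binner (gray c) (gray c') = sum_list (map2 Hf c c')"
  unfolding binner_def gray_def Hf_def
  by (simp add: zip_map_map sum_list_addf comp_def add.assoc split_def del: add_bit_eq_xor mult_bit_eq_and)

lemma dvec_inj: "dvec a b c = dvec a' b' c' \<Longrightarrow> a = a' \<and> b = b' \<and> c = c'"
proof -
  assume h: "dvec a b c = dvec a' b' c'"
  have "a i = a' i \<and> b i = b' i \<and> c i = c' i" for i
    using fun_cong[OF h, of i] unfolding dvec_eq
    by (cases "a i"; cases "b i"; cases "c i"; cases "a' i"; cases "b' i"; cases "c' i") simp_all
  then show ?thesis by auto
qed

lemma main_sum:
  assumes fin: "finite D1" "finite D2" "finite D3"
    and ev: "even (card D1)" "even (card D2)" "even (card D3)"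
    and "distinct ds" "set ds = defset D1 D2 D3"
  shows "binner (gray (map (rdot m v) ds)) (gray (map (rdot m w) ds)) = 0"
proof -
  define dv where "dv = (\<lambda>(a,b,c). dvec a b c)"
  have setds: "set ds = dv ` (D1 \<times> D2 \<times> D3)"
    unfolding assms(8) defset_def dv_def dvec_def
    apply auto
    apply (rule_tac x="(t1,t2,t3)" in image_eqI)
    by auto
  have inj: "inj_on dv (D1 \<times> D2 \<times> D3)"
    unfolding inj_on_def dv_def using dvec_inj by auto
  have "binner (gray (map (rdot m v) ds)) (gray (map (rdot m w) ds))
      = sum_list (map (\<lambda>d. Hf (rdot m v d) (rdot m w d)) ds)"
    by (simp add: binner_gray zip_map_map zip_same_conv_map comp_def del: add_bit_eq_xor mult_bit_eq_and)
  also have "\<dots> = (\<Sum>d\<in>set ds. Hf (rdot m v d) (rdot m w d))"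
    by (rule sum_list_distinct_conv_sum_set[OF assms(7)])
  also have "\<dots> = (\<Sum>p\<in>D1 \<times> D2 \<times> D3. Hf (rdot m v (dv p)) (rdot m w (dv p)))"
    unfolding setds using sum.reindex[OF inj] by simp
  also have "\<dots> = (\<Sum>(a,b,c)\<in>D1 \<times> D2 \<times> D3. Hf (rdot m v (dvec a b c)) (rdot m w (dvec a b c)))"
    unfolding dv_def by (simp add: split_def)
  also have "\<dots> = (\<Sum>(a,b,c)\<in>D1 \<times> D2 \<times> D3.
        (Lin m (\<lambda>i. r_of (v i)) a + Lin m (\<lambda>i. s_of (v i)) b + Lin m (\<lambda>i. r_of (v i) + s_of (v i) + t_of (v i)) c) *
        (Lin m (\<lambda>i. r_of (w i)) a + Lin m (\<lambda>i. s_of (w i)) b + Lin m (\<lambda>i. r_of (w i) + s_of (w i) + t_of (w i)) c))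
     + (\<Sum>(a,b,c)\<in>D1 \<times> D2 \<times> D3.
        (Lin m (\<lambda>i. r_of (v i)) a + Lin m (\<lambda>i. r_of (v i) + s_of (v i) + t_of (v i)) b + Lin m (\<lambda>i. 0) c) *
        (Lin m (\<lambda>i. r_of (w i)) a + Lin m (\<lambda>i. r_of (w i) + s_of (w i) + t_of (w i)) b + Lin m (\<lambda>i. 0) c))
     + (\<Sum>(a,b,c)\<in>D1 \<times> D2 \<times> D3.
        (Lin m (\<lambda>i. r_of (v i)) a + Lin m (\<lambda>i. r_of (v i) + t_of (v i)) b + Lin m (\<lambda>i. r_of (v i) + s_of (v i) + t_of (v i)) c) *
        (Lin m (\<lambda>i. r_of (w i)) a + Lin m (\<lambda>i. r_of (w i) + t_of (w i)) b + Lin m (\<lambda>i. r_of (w i) + s_of (w i) + t_of (w i)) c))"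
    unfolding Hf_def split_def G1 G2 unfolding G3 by (simp only: sum.distrib)
  also have "\<dots> = 0"
    using key[OF fin ev] by (simp only: add_0_left)
  finally show ?thesis .
qed

theorem proposition4p3:
  fixes m :: nat and L M N :: "nat set"
    and D1 D2 D3 :: "(nat \<Rightarrow> bit) set" and ds :: "(nat \<Rightarrow> rr) list"
  assumes "L \<subseteq> {1..m}" "L \<noteq> {}"
      and "M \<subseteq> {1..m}" "M \<noteq> {}"
      and "N \<subseteq> {1..m}" "N \<noteq> {}"
      and "D1 \<in> {Delta m L, Delta_c m L}"
      and "D2 \<in> {Delta m M, Delta_c m M}"
      and "D3 \<in> {Delta m N, Delta_c m N}"
      and "distinct ds" "set ds = defset D1 D2 D3"
  shows "self_orthogonal (3 * length ds) (gray_code (code_D m ds))"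
proof -
  have d1: "finite D1" "even (card D1)" using Dsets_ok[OF assms(1,2,7)] by auto
  have d2: "finite D2" "even (card D2)" using Dsets_ok[OF assms(3,4,8)] by auto
  have d3: "finite D3" "even (card D3)" using Dsets_ok[OF assms(5,6,9)] by auto
  note ms = main_sum[OF d1(1) d2(1) d3(1) d1(2) d2(2) d3(2) assms(10,11)]
  show ?thesis
    unfolding self_orthogonal_def dual_code_def gray_code_def code_D_def
    using ms by (auto simp: gray_def)
qed

end
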